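(* Let $\rho:\mathbb R\to[0,\infty)$ be strictly convex with $\rho(0)=0$. For a nonempty finite index set $T$ and real numbers $(Y_i)_{i\in T}$ let $m_T$ denote the minimizer over $\mu\in\mathbb R$ of $\sum_{i\in T}\rho(Y_i-\mu)$. Then for every nonempty finite index set $S$, every family of real numbers $(Y_i)_{i\in S}$ and every partition $S=\bigcup_{j}S_j$ into finitely many pairwise disjoint nonempty sets $S_j$, \[\min_j m_{S_j}\le m_S\le \max_j m_{S_j}.\] *)

theory Defs
  imports "HOL-Analysis.Analysis" "HOL-Library.Disjoint_Sets"
begin

definition strictly_convex :: "(real \<Rightarrow> real) \<Rightarrow> bool" where
  "strictly_convex f \<longleftrightarrow>
     (\<forall>x y t. x \<noteq> y \<longrightarrow> 0 < t \<longrightarrow> t < 1 \<longrightarrow>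
        f ((1 - t) * x + t * y) < (1 - t) * f x + t * f y)"

definition loc_min :: "(real \<Rightarrow> real) \<Rightarrow> ('a \<Rightarrow> real) \<Rightarrow> 'a set \<Rightarrow> real" where
  "loc_min rho Y T =
     (THE mu. \<forall>nu. (\<Sum>i\<in>T. rho (Y i - mu)) \<le> (\<Sum>i\<in>T. rho (Y i - nu)))"

end

theory Submission
  imports Defs
begin

lemma sc_conv:
  assumes "strictly_convex rho" "0 \<le> t" "t \<le> 1"
  shows "rho ((1 - t) * x + t * y) \<le> (1 - t) * rho x + t * rho y"
proof (cases "x = y \<or> t = 0 \<or> t = 1")
  case True
  then show ?thesis by (auto simp: algebra_simps)
next
  case False
  then show ?thesis using assms unfolding strictly_convex_def
    by (metis less_eq_real_def)
qed

lemma F_conv: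
  assumes "strictly_convex rho" "0 \<le> t" "t \<le> 1"
  shows "(\<Sum>i\<in>T. rho (Y i - ((1 - t) * x + t * y)))
      \<le> (1 - t) * (\<Sum>i\<in>T. rho (Y i - x)) + t * (\<Sum>i\<in>T. rho (Y i - y))"
proof -
  have "(\<Sum>i\<in>T. rho (Y i - ((1 - t) * x + t * y)))
      \<le> (\<Sum>i\<in>T. (1 - t) * rho (Y i - x) + t * rho (Y i - y))"
  proof (rule sum_mono)
    fix i
    have "Y i - ((1 - t) * x + t * y) = (1 - t) * (Y i - x) + t * (Y i - y)"
      by (simp add: algebra_simps)
    then show "rho (Y i - ((1 - t) * x + t * y)) \<le> (1 - t) * rho (Y i - x) + t * rho (Y i - y)"
      using sc_conv[OF assms] by simp
  qed
  then show ?thesis by (simp add: sum.distrib sum_distrib_left)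
qed

lemma F_strict:
  assumes "strictly_convex rho" "0 < t" "t < 1" "finite T" "T \<noteq> {}" "x \<noteq> y"
  shows "(\<Sum>i\<in>T. rho (Y i - ((1 - t) * x + t * y)))
      < (1 - t) * (\<Sum>i\<in>T. rho (Y i - x)) + t * (\<Sum>i\<in>T. rho (Y i - y))"
proof -
  have "(\<Sum>i\<in>T. rho (Y i - ((1 - t) * x + t * y)))
      < (\<Sum>i\<in>T. (1 - t) * rho (Y i - x) + t * rho (Y i - y))"
  proof (rule sum_strict_mono[OF assms(4,5)])
    fix i
    have "Y i - ((1 - t) * x + t * y) = (1 - t) * (Y i - x) + t * (Y i - y)"
      by (simp add: algebra_simps)
    moreover have "Y i - x \<noteq> Y i - y" using assms(6) by simp
    ultimately show "rho (Y i - ((1 - t) * x + t * y)) < (1 - t) * rho (Y i - x) + t * rho (Y i - y)"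
      using assms(1-3) unfolding strictly_convex_def by simp
  qed
  then show ?thesis by (simp add: sum.distrib sum_distrib_left)
qed

lemma rho_lin:
  assumes "strictly_convex rho" "\<And>x. rho x \<ge> 0" "rho 0 = 0"
  shows "rho x \<ge> min (rho 1) (rho (-1)) * (\<bar>x\<bar> - 1)" and "min (rho 1) (rho (-1)) > 0"
proof -
  have pos: "rho z > 0" if "z \<noteq> 0" for z
  proof -
    have "rho ((1 - 1/2) * 0 + (1/2) * z) < (1 - 1/2) * rho 0 + (1/2) * rho z"
    proof -
      have "\<forall>x y t. x \<noteq> y \<longrightarrow> 0 < t \<longrightarrow> t < 1 \<longrightarrow> rho ((1 - t) * x + t * y) < (1 - t) * rho x + t * rho y"
        using assms(1) unfolding strictly_convex_def by blast
      from this[rule_format, of 0 z "1/2"] that show ?thesis by simp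
    qed
    moreover have "rho ((1 - 1/2) * 0 + (1/2) * z) \<ge> 0" using assms(2) by simp
    ultimately show ?thesis using assms(3) by simp
  qed
  show c: "min (rho 1) (rho (-1)) > 0" using pos[of 1] pos[of "-1"] by simp
  let ?c = "min (rho 1) (rho (-1))"
  show "rho x \<ge> ?c * (\<bar>x\<bar> - 1)"
  proof (cases "\<bar>x\<bar> \<le> 1")
    case True
    then have "?c * (\<bar>x\<bar> - 1) \<le> 0" using c by (simp add: mult_nonneg_nonpos)
    then show ?thesis using assms(2)[of x] by linarith
  next
    case False
    define s where "s = sgn x"
    have s: "s * \<bar>x\<bar> = x" "s = 1 \<or> s = -1" using False by (auto simp: s_def sgn_if)
    have "rho ((1 - 1/\<bar>x\<bar>) * 0 + (1/\<bar>x\<bar>) * x) \<le> (1 - 1/\<bar>x\<bar>) * rho 0 + (1/\<bar>x\<bar>) * rho x"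
      using sc_conv[OF assms(1), of "1/\<bar>x\<bar>" 0 x] False by simp
    moreover have "(1/\<bar>x\<bar>) * x = s" using s False by (metis abs_0 divide_self_if nonzero_mult_div_cancel_right times_divide_eq_left mult.commute zero_less_one_class.zero_le_one)
    ultimately have "rho s \<le> rho x / \<bar>x\<bar>" using assms(3) by simp
    then have "rho s * \<bar>x\<bar> \<le> rho x" using False by (simp add: pos_le_divide_eq)
    moreover have "?c \<le> rho s" using s(2) by auto
    ultimately have "?c * \<bar>x\<bar> \<le> rho x" using False
      by (smt (verit) mult_right_mono)
    then show ?thesis using c by (simp add: algebra_simps min_def split: if_splits)
  qed
qed

lemma exists_min:
  assumes "strictly_convex rho" "\<And>x. rho x \<ge> 0" "rho 0 = 0" "finite T" "T \<noteq> {}"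
  shows "\<exists>m. \<forall>nu. (\<Sum>i\<in>T. rho (Y i - m)) \<le> (\<Sum>i\<in>T. rho (Y i - nu))"
proof -
  define F where "F = (\<lambda>mu. \<Sum>i\<in>T. rho (Y i - mu))"
  have cr: "continuous_on UNIV rho"
  proof (rule convex_on_continuous)
    show "convex_on UNIV rho"
      by (rule convex_onI) (use sc_conv[OF assms(1)] in auto)
  qed simp
  have cF: "continuous_on UNIV F" unfolding F_def
    by (intro continuous_intros continuous_on_compose2[OF cr]) auto
  obtain i0 where i0: "i0 \<in> T" using assms(5) by auto
  let ?c = "min (rho 1) (rho (-1))"
  have c: "?c > 0" using rho_lin[OF assms(1-3)] by simp
  define R where "R = (F 0 + ?c) / ?c + \<bar>Y i0\<bar> + 1"
  have F0: "F 0 \<ge> 0" unfolding F_def using assms(2) by (simp add: sum_nonneg)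
  have R1: "R \<ge> 1" unfolding R_def using c F0 by (simp add: add_nonneg_nonneg)
  have out: "F nu > F 0" if "\<bar>nu\<bar> > R" for nu
  proof -
    have "F nu \<ge> rho (Y i0 - nu)" unfolding F_def
      using member_le_sum[of i0 T "\<lambda>i. rho (Y i - nu)"] i0 assms(2,4) by auto
    moreover have "rho (Y i0 - nu) \<ge> ?c * (\<bar>Y i0 - nu\<bar> - 1)" using rho_lin[OF assms(1-3)] by simp
    moreover have "\<bar>Y i0 - nu\<bar> - 1 > (F 0 + ?c) / ?c - 1" using that unfolding R_def by linarith
    then have "?c * (\<bar>Y i0 - nu\<bar> - 1) > ?c * ((F 0 + ?c) / ?c - 1)" using c by simp
    moreover have "?c * ((F 0 + ?c) / ?c - 1) = F 0" using c by (simp add: right_diff_distrib less_imp_neq[symmetric])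
    ultimately show ?thesis by linarith
  qed
  obtain m where m: "m \<in> cball 0 R" "\<forall>y\<in>cball 0 R. F m \<le> F y"
    using continuous_attains_inf[of "cball 0 R" F] cF R1
    by (metis compact_cball cball_eq_empty continuous_on_subset not_le top_greatest order.trans zero_le_one linorder_not_le)
  have "F m \<le> F nu" for nu
  proof (cases "\<bar>nu\<bar> \<le> R")
    case True then show ?thesis using m by (simp add: dist_real_def)
  next
    case False
    have "F m \<le> F 0" using m R1 by simp
    then show ?thesis using out[of nu] False by simp
  qed
  then show ?thesis unfolding F_def by blast
qed

lemma loc_min_prop:
  assumes "strictly_convex rho" "\<And>x. rho x \<ge> 0" "rho 0 = 0" "finite T" "T \<noteq> {}"
  shows "\<forall>nu. (\<Sum>i\<in>T. rho (Y i - loc_min rho Y T)) \<le> (\<Sum>i\<in>T. rho (Y i - nu))"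
    and "\<forall>nu. (\<Sum>i\<in>T. rho (Y i - m)) \<le> (\<Sum>i\<in>T. rho (Y i - nu)) \<Longrightarrow> m = loc_min rho Y T"
proof -
  define F where "F = (\<lambda>mu. \<Sum>i\<in>T. rho (Y i - mu))"
  have uniq: "x = y" if "\<forall>nu. F x \<le> F nu" "\<forall>nu. F y \<le> F nu" for x y
  proof (rule ccontr)
    assume "x \<noteq> y"
    then have "F ((1 - 1/2) * x + (1/2) * y) < (1 - 1/2) * F x + (1/2) * F y"
      unfolding F_def using F_strict[OF assms(1) _ _ assms(4,5), of "1/2" x y Y] by simp
    moreover have "F x = F y" using that by (meson order.antisym)
    ultimately show False using that(1)[rule_format, of "(1 - 1/2) * x + (1/2) * y"] by simp
  qed
  have ex: "\<exists>!m. \<forall>nu. F m \<le> F nu"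
    using exists_min[OF assms, of Y] uniq unfolding F_def by blast
  have ld: "loc_min rho Y T = (THE mu. \<forall>nu. F mu \<le> F nu)" unfolding loc_min_def F_def ..
  show "\<forall>nu. (\<Sum>i\<in>T. rho (Y i - loc_min rho Y T)) \<le> (\<Sum>i\<in>T. rho (Y i - nu))"
    using theI'[OF ex] unfolding ld F_def .
  show "\<forall>nu. (\<Sum>i\<in>T. rho (Y i - m)) \<le> (\<Sum>i\<in>T. rho (Y i - nu)) \<Longrightarrow> m = loc_min rho Y T"
    using the1_equality[OF ex] unfolding ld F_def by metis
qed

lemma upper_bound:
  assumes rc: "strictly_convex rho" and nn: "\<And>x. rho x \<ge> 0" and r0: "rho 0 = 0"
    and fS: "finite S" and ne: "S \<noteq> {}" and part: "partition_on S P"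
    and bnd: "\<And>B. B \<in> P \<Longrightarrow> loc_min rho Y B \<le> b"
  shows "loc_min rho Y S \<le> b"
proof (rule ccontr)
  define F where "F = (\<lambda>T mu. \<Sum>i\<in>T. rho (Y i - mu))"
  define m where "m = loc_min rho Y S"
  assume "\<not> loc_min rho Y S \<le> b"
  then have mb: "b < m" unfolding m_def by simp
  have PS: "\<Union>P = S" "disjoint P" "{} \<notin> P" using part unfolding partition_on_def by auto
  have fB: "finite B" "B \<noteq> {}" if "B \<in> P" for B
    using that PS fS by (auto intro: finite_subset)
  have finP: "finite P" using PS fS by (metis finite_UnionD)
  have blk: "F B b \<le> F B m" if B: "B \<in> P" for B
  proof -
    define mB where "mB = loc_min rho Y B"
    have mBmin: "\<forall>nu. F B mB \<le> F B nu" using loc_min_prop(1)[OF rc nn r0 fB[OF B]] unfolding F_def mB_def .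
    have mBb: "mB \<le> b" using bnd[OF B] unfolding mB_def .
    define t where "t = (b - mB) / (m - mB)"
    have t: "0 \<le> t" "t \<le> 1" using mBb mb unfolding t_def by (auto simp: divide_simps)
    have nz: "m - mB \<noteq> 0" using mBb mb by simp
    have e1: "t * (m - mB) = b - mB" using nz unfolding t_def by simp
    have "(1 - t) * mB + t * m = mB + t * (m - mB)" by (simp add: algebra_simps)
    then have "(1 - t) * mB + t * m = b" using e1 by simp
    then have "F B b \<le> (1 - t) * F B mB + t * F B m"
      using F_conv[OF rc t, where T=B and Y=Y and x=mB and y=m] unfolding F_def by simp
    also have "\<dots> \<le> (1 - t) * F B m + t * F B m"
      using mBmin t by (intro add_right_mono mult_left_mono) auto
    finally show ?thesis by (simp add: algebra_simps)
  qed
  have decomp: "F S mu = (\<Sum>B\<in>P. F B mu)" for mu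
    unfolding F_def PS(1)[symmetric]
    using sum.Union_disjoint[of P "\<lambda>i. rho (Y i - mu)"] fB PS(2)
    by (auto simp: disjoint_def)
  have "F S b \<le> F S m" unfolding decomp by (rule sum_mono) (rule blk)
  moreover have mmin: "\<forall>nu. F S m \<le> F S nu" using loc_min_prop(1)[OF rc nn r0 fS ne] unfolding F_def m_def .
  ultimately have "\<forall>nu. F S b \<le> F S nu" by (meson order.trans)
  then have "b = m" using loc_min_prop(2)[OF rc nn r0 fS ne] unfolding F_def m_def by blast
  then show False using mb by simp
qed

lemma lower_bound:
  assumes rc: "strictly_convex rho" and nn: "\<And>x. rho x \<ge> 0" and r0: "rho 0 = 0"
    and fS: "finite S" and ne: "S \<noteq> {}" and part: "partition_on S P"
    and bnd: "\<And>B. B \<in> P \<Longrightarrow> a \<le> loc_min rho Y B"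
  shows "a \<le> loc_min rho Y S"
proof (rule ccontr)
  define F where "F = (\<lambda>T mu. \<Sum>i\<in>T. rho (Y i - mu))"
  define m where "m = loc_min rho Y S"
  assume "\<not> a \<le> loc_min rho Y S"
  then have mb: "m < a" unfolding m_def by simp
  have PS: "\<Union>P = S" "disjoint P" "{} \<notin> P" using part unfolding partition_on_def by auto
  have fB: "finite B" "B \<noteq> {}" if "B \<in> P" for B
    using that PS fS by (auto intro: finite_subset)
  have finP: "finite P" using PS fS by (metis finite_UnionD)
  have blk: "F B a \<le> F B m" if B: "B \<in> P" for B
  proof -
    define mB where "mB = loc_min rho Y B"
    have mBmin: "\<forall>nu. F B mB \<le> F B nu" using loc_min_prop(1)[OF rc nn r0 fB[OF B]] unfolding F_def mB_def .
    have mBb: "a \<le> mB" using bnd[OF B] unfolding mB_def .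
    define t where "t = (mB - a) / (mB - m)"
    have t: "0 \<le> t" "t \<le> 1" using mBb mb unfolding t_def by (auto simp: divide_simps)
    have nz: "mB - m \<noteq> 0" using mBb mb by simp
    have e1: "t * (mB - m) = mB - a" using nz unfolding t_def by simp
    have "(1 - t) * mB + t * m = mB - t * (mB - m)" by (simp add: algebra_simps)
    then have "(1 - t) * mB + t * m = a" using e1 by simp
    then have "F B a \<le> (1 - t) * F B mB + t * F B m"
      using F_conv[OF rc t, where T=B and Y=Y and x=mB and y=m] unfolding F_def by simp
    also have "\<dots> \<le> (1 - t) * F B m + t * F B m"
      using mBmin t by (intro add_right_mono mult_left_mono) auto
    finally show ?thesis by (simp add: algebra_simps)
  qed
  have decomp: "F S mu = (\<Sum>B\<in>P. F B mu)" for mu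
    unfolding F_def PS(1)[symmetric]
    using sum.Union_disjoint[of P "\<lambda>i. rho (Y i - mu)"] fB PS(2)
    by (auto simp: disjoint_def)
  have "F S a \<le> F S m" unfolding decomp by (rule sum_mono) (rule blk)
  moreover have mmin: "\<forall>nu. F S m \<le> F S nu" using loc_min_prop(1)[OF rc nn r0 fS ne] unfolding F_def m_def .
  ultimately have "\<forall>nu. F S a \<le> F S nu" by (meson order.trans)
  then have "a = m" using loc_min_prop(2)[OF rc nn r0 fS ne] unfolding F_def m_def by blast
  then show False using mb by simp
qed

theorem lemma3p2:
  fixes rho :: "real \<Rightarrow> real" and Y :: "'a \<Rightarrow> real"
    and S :: "'a set" and P :: "'a set set"
  assumes "strictly_convex rho"
    and "\<And>x. rho x \<ge> 0"
    and "rho 0 = 0"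
    and "finite S" and "S \<noteq> {}"
    and "partition_on S P"
  shows "Min ((\<lambda>B. loc_min rho Y B) ` P) \<le> loc_min rho Y S
       \<and> loc_min rho Y S \<le> Max ((\<lambda>B. loc_min rho Y B) ` P)"
proof -
  have PS: "\<Union>P = S" using assms(6) unfolding partition_on_def by auto
  have finP: "finite P" using PS assms(4) by (metis finite_UnionD)
  have neP: "P \<noteq> {}" using PS assms(5) by auto
  show ?thesis
  proof
    show "Min ((\<lambda>B. loc_min rho Y B) ` P) \<le> loc_min rho Y S"
      by (rule lower_bound[OF assms]) (use finP neP in simp)
    show "loc_min rho Y S \<le> Max ((\<lambda>B. loc_min rho Y B) ` P)"
      by (rule upper_bound[OF assms]) (use finP neP in simp)
  qed
qed

end
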